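(* Let $y_1,y_2,y_3\in Y(\mathfrak{o})$, $d\in D(3)$, $u\in U(3)$, $C\in\Gamma_\infty(3)$, and let $A=\varphi_2(y_1^{-1})\varphi_1(y_2^{-1})\varphi_2(y_3^{-1})\,d\,u\,C$. (1) If $A\in\Delta_1$ then $y_2\neq I_2$. (2) If $A\in\Delta_{1,1}$ then $y_3\neq I_2$.
   Context: Let $\omega=e^{2\pi i/3}$, $\mathfrak{o}=\mathbb{Z}[\omega]$, $\mathfrak{o}^\times$ its unit group. Fix representatives of nonzero elements of $\mathfrak{o}$ modulo units ("$c\in(\mathfrak{o}-\{0\})/\mathfrak{o}^\times$") and, for each nonzero $c$, representatives of $\mathfrak{o}/c\mathfrak{o}$ ("$a\in\mathfrak{o}/c\mathfrak{o}$"). $Y(\mathfrak{o})=\{\begin{pmatrix}a&b\\c&d\end{pmatrix}\in SL_2(\mathfrak{o}) : c\in(\mathfrak{o}-\{0\})/\mathfrak{o}^\times,\ a\in\mathfrak{o}/c\mathfrak{o}\}\cup\{I_2\}$. $\Gamma(3)=\{A\in SL_3(\mathfrak{o}):A\equiv I_3\pmod{3\mathfrak{o}}\}$ (entrywise), $\Gamma_\infty(3)$ its subgroup of upper triangular unipotent matrices. $D(3)$: diagonal $\mathrm{diag}(i,j,k)$, $i,j,k\in\mathfrak{o}$, $ijk=1$. $U(3)$: matrices $\begin{pmatrix}1&\alpha&\beta\\&1&\gamma\\&&1\end{pmatrix}$ with $\alpha,\beta,\gamma\in\{0,1,2\}+\{0,1,2\}\omega$. For $y=\begin{pmatrix}a&b\\c&d\end{pmatrix}$,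 $\varphi_1(y)=\begin{pmatrix}a&b&0\\c&d&0\\0&0&1\end{pmatrix}$, $\varphi_2(y)=\begin{pmatrix}1&0&0\\0&a&b\\0&c&d\end{pmatrix}$. For $A=(a_{ij})\in SL_3(\mathfrak{o})$: $\Delta_1=\{A: a_{21}\neq0 \text{ or } a_{31}\neq0\}$ and $\Delta_{1,1}=\{A : a_{21}a_{32}-a_{22}a_{31}\neq0\}$. *)

theory Defs
  imports "HOL-Analysis.Analysis"
begin

text \<open>Matrices are HOL-Analysis matrices over complex numbers; rows/columns are
indexed 1,2 (type 2) resp. 1,2,3 (type 3), entry (i,j) of M is M$i$j.\<close>

definition omega :: complex where
  "omega = cis (2 * pi / 3)"

definition Oring :: "complex set" where
  "Oring = {of_int a + of_int b * omega | a b. True}"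

definition unit_O :: "complex \<Rightarrow> bool" where
  "unit_O u \<longleftrightarrow> u \<in> Oring \<and> (\<exists>v\<in>Oring. u * v = 1)"

definition c_reps :: "complex set \<Rightarrow> bool" where
  "c_reps R \<longleftrightarrow> R \<subseteq> Oring - {0} \<and>
     (\<forall>z\<in>Oring - {0}. \<exists>!r. r \<in> R \<and> (\<exists>u. unit_O u \<and> z = u * r))"

definition a_reps :: "complex \<Rightarrow> complex set \<Rightarrow> bool" where
  "a_reps c S \<longleftrightarrow> S \<subseteq> Oring \<and>
     (\<forall>z\<in>Oring. \<exists>!s. s \<in> S \<and> (\<exists>t\<in>Oring. z - s = c * t))"

definition SL2O :: "(complex^2^2) set" where
  "SL2O = {M. (\<forall>i j. M$i$j \<in> Oring) \<and> det M = 1}"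

definition SL3O :: "(complex^3^3) set" where
  "SL3O = {M. (\<forall>i j. M$i$j \<in> Oring) \<and> det M = 1}"

text \<open>Y(o), relative to the fixed representative systems R (for c) and S c (for a mod c).\<close>
definition Yset :: "complex set \<Rightarrow> (complex \<Rightarrow> complex set) \<Rightarrow> (complex^2^2) set" where
  "Yset R S = {M \<in> SL2O. M$2$1 \<in> R \<and> M$1$1 \<in> S (M$2$1)} \<union> {mat 1}"

definition Gamma3 :: "(complex^3^3) set" where
  "Gamma3 = {A \<in> SL3O. \<forall>i j. \<exists>t\<in>Oring. A$i$j - (mat 1 :: complex^3^3)$i$j = 3 * t}"

definition upper_unipotent :: "complex^3^3 \<Rightarrow> bool" where
  "upper_unipotent A \<longleftrightarrow> A$1$1 = 1 \<and> A$2$2 = 1 \<and> A$3$3 = 1 \<and>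
     A$2$1 = 0 \<and> A$3$1 = 0 \<and> A$3$2 = 0"

definition Gamma_inf3 :: "(complex^3^3) set" where
  "Gamma_inf3 = {A \<in> Gamma3. upper_unipotent A}"

definition diag3 :: "complex \<Rightarrow> complex \<Rightarrow> complex \<Rightarrow> complex^3^3" where
  "diag3 i j k = vector [vector [i, 0, 0], vector [0, j, 0], vector [0, 0, k]]"

definition D3 :: "(complex^3^3) set" where
  "D3 = {diag3 i j k | i j k. i \<in> Oring \<and> j \<in> Oring \<and> k \<in> Oring \<and> i * j * k = 1}"

definition small_O :: "complex set" where
  "small_O = {of_int a + of_int b * omega | a b. a \<in> {0,1,2} \<and> b \<in> {0,1,2}}"

definition unip3 :: "complex \<Rightarrow> complex \<Rightarrow> complex \<Rightarrow> complex^3^3" where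
  "unip3 \<alpha> \<beta> \<gamma> = vector [vector [1, \<alpha>, \<beta>], vector [0, 1, \<gamma>], vector [0, 0, 1]]"

definition U3 :: "(complex^3^3) set" where
  "U3 = {unip3 \<alpha> \<beta> \<gamma> | \<alpha> \<beta> \<gamma>. \<alpha> \<in> small_O \<and> \<beta> \<in> small_O \<and> \<gamma> \<in> small_O}"

definition phi1 :: "complex^2^2 \<Rightarrow> complex^3^3" where
  "phi1 y = vector [vector [y$1$1, y$1$2, 0], vector [y$2$1, y$2$2, 0], vector [0, 0, 1]]"

definition phi2 :: "complex^2^2 \<Rightarrow> complex^3^3" where
  "phi2 y = vector [vector [1, 0, 0], vector [0, y$1$1, y$1$2], vector [0, y$2$1, y$2$2]]"

definition Delta1 :: "(complex^3^3) set" where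
  "Delta1 = {A \<in> SL3O. A$2$1 \<noteq> 0 \<or> A$3$1 \<noteq> 0}"

definition Delta11 :: "(complex^3^3) set" where
  "Delta11 = {A \<in> SL3O. A$2$1 * A$3$2 - A$2$2 * A$3$1 \<noteq> 0}"

end

theory Submission
  imports Defs
begin

lemma minv_I: "matrix_inv (mat 1 :: complex^2^2) = mat 1"
proof -
  have "mat 1 ** (mat 1 :: complex^2^2) = mat 1 \<and> (mat 1 :: complex^2^2) ** mat 1 = mat 1"
    by (simp add: matrix_mul_lid)
  hence "mat 1 ** matrix_inv (mat 1 :: complex^2^2) = mat 1"
    unfolding matrix_inv_def by (rule someI2) auto
  thus ?thesis by (simp add: matrix_mul_lid)
qed

lemma mm3: "((A::complex^3^3) ** B)$i$j = A$i$1*B$1$j + A$i$2*B$2$j + A$i$3*B$3$j"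
  by (simp add: matrix_matrix_mult_def sum_3)

lemma upper_mul:
  assumes "(T::complex^3^3)$2$1 = 0" "T$3$1 = 0" "T$3$2 = 0"
    "(V::complex^3^3)$2$1 = 0" "V$3$1 = 0" "V$3$2 = 0"
  shows "(T ** V)$2$1 = 0 \<and> (T ** V)$3$1 = 0 \<and> (T ** V)$3$2 = 0"
  using assms by (simp add: mm3)

theorem lemma2p12:
  fixes R :: "complex set" and S :: "complex \<Rightarrow> complex set"
    and y1 y2 y3 :: "complex^2^2" and d u C A :: "complex^3^3"
  assumes "c_reps R"
    and "\<forall>c\<in>R. a_reps c (S c)"
    and "y1 \<in> Yset R S" and "y2 \<in> Yset R S" and "y3 \<in> Yset R S"
    and "d \<in> D3" and "u \<in> U3" and "C \<in> Gamma_inf3"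
    and "A = phi2 (matrix_inv y1) ** phi1 (matrix_inv y2) ** phi2 (matrix_inv y3) ** d ** u ** C"
  shows "(A \<in> Delta1 \<longrightarrow> y2 \<noteq> mat 1) \<and> (A \<in> Delta11 \<longrightarrow> y3 \<noteq> mat 1)"
proof -
  define T where "T = d ** u ** C"
  have d: "d$2$1 = 0 \<and> d$3$1 = 0 \<and> d$3$2 = 0" using assms(6) by (auto simp: D3_def diag3_def)
  have u: "u$2$1 = 0 \<and> u$3$1 = 0 \<and> u$3$2 = 0" using assms(7) by (auto simp: U3_def unip3_def)
  have c: "C$2$1 = 0 \<and> C$3$1 = 0 \<and> C$3$2 = 0" using assms(8) by (auto simp: Gamma_inf3_def upper_unipotent_def)
  have T: "T$2$1 = 0 \<and> T$3$1 = 0 \<and> T$3$2 = 0"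
    unfolding T_def using upper_mul d u c by metis
  define a where "a = matrix_inv y1"
  define b where "b = matrix_inv y2"
  define e where "e = matrix_inv y3"
  have A: "A = phi2 a ** phi1 b ** phi2 e ** T"
    using assms(9) by (simp add: T_def a_def b_def e_def matrix_mul_assoc)
  show ?thesis
  proof (intro conjI impI notI)
    assume "A \<in> Delta1" "y2 = mat 1"
    hence "b = mat 1" using minv_I b_def by simp
    hence "A$2$1 = 0 \<and> A$3$1 = 0" using T unfolding A
      by (simp add: mm3 phi1_def phi2_def mat_def)
    thus False using \<open>A \<in> Delta1\<close> by (simp add: Delta1_def)
  next
    assume "A \<in> Delta11" "y3 = mat 1"
    hence "e = mat 1" using minv_I e_def by simp
    hence "A$2$1 * A$3$2 - A$2$2 * A$3$1 = 0" using T unfolding A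
      by (simp add: mm3 phi1_def phi2_def mat_def algebra_simps)
    thus False using \<open>A \<in> Delta11\<close> by (simp add: Delta11_def)
  qed
qed

end
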